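(* Let $(\mathcal S,\mathcal A,P,r)$ be any finite MDP (general/multichain) and $(g^\star,h^\star)$ a solution of the modified Bellman equations. Let $V^0\in\mathbb R^n$, $0\le\lambda_k<1$ for $k\ge1$, and $V^k=\lambda_kV^0+(1-\lambda_k)TV^{k-1}$ for $k\ge1$ (Anchored Value Iteration). Then for every $k\ge1$, \[\Big\|\frac{V^k-V^0}{\sum_{i=1}^k\prod_{j=i}^k(1-\lambda_j)}-g^\star\Big\|_\infty\le\frac{2(1-\lambda_k)}{\sum_{i=1}^k\prod_{j=i}^k(1-\lambda_j)}\|V^0-h^\star\|_\infty.\]
   Context: An MDP $(\mathcal S,\mathcal A,P,r)$ has finite state space $\mathcal S$ ($|\mathcal S|=n$, functions identified with $\mathbb R^n$), finite action space, transition probabilities $P(s'\mid s,a)$ and bounded reward $r$. The Bellman optimality operator is $(TV)(s)=\max_a\{r(s,a)+\sum_{s'}P(s'\mid s,a)V(s')\}$. $g^\star(s)=\max_\pi\liminf_{T\to\infty}\frac1T\mathbb E_\pi[\sum_{t=0}^{T-1}r(s_t,a_t)\mid s_0=s]$. A pair $(g,h)$ solves the modified Bellman equations if $\max_a\sum_{s'}P(s'\mid s,a)g(s')=g(s)$ and $\max_a\{r(s,a)+\sum_{s'}P(s'\mid s,a)h(s')\}=h(s)+g(s)$ for all $s$, with some policy attaining both maxima simultaneously; the first component of any solution equals $g^\star$. *)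

theory Defs
  imports Main "HOL-Analysis.Analysis"
begin

definition is_mdp :: "('s::finite \<Rightarrow> 'a::finite \<Rightarrow> 's \<Rightarrow> real) \<Rightarrow> bool" where
  "is_mdp P \<longleftrightarrow> (\<forall>s a s'. 0 \<le> P s a s') \<and> (\<forall>s a. (\<Sum>s'\<in>UNIV. P s a s') = 1)"

definition bellman_T ::
  "('s::finite \<Rightarrow> 'a::finite \<Rightarrow> 's \<Rightarrow> real) \<Rightarrow> ('s \<Rightarrow> 'a \<Rightarrow> real) \<Rightarrow> ('s \<Rightarrow> real) \<Rightarrow> ('s \<Rightarrow> real)" where
  "bellman_T P r V = (\<lambda>s. Max (range (\<lambda>a. r s a + (\<Sum>s'\<in>UNIV. P s a s' * V s'))))"

definition modified_bellman_solution ::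
  "('s::finite \<Rightarrow> 'a::finite \<Rightarrow> 's \<Rightarrow> real) \<Rightarrow> ('s \<Rightarrow> 'a \<Rightarrow> real) \<Rightarrow> ('s \<Rightarrow> real) \<Rightarrow> ('s \<Rightarrow> real) \<Rightarrow> bool" where
  "modified_bellman_solution P r g h \<longleftrightarrow>
     (\<forall>s. Max (range (\<lambda>a. \<Sum>s'\<in>UNIV. P s a s' * g s')) = g s) \<and>
     (\<forall>s. Max (range (\<lambda>a. r s a + (\<Sum>s'\<in>UNIV. P s a s' * h s'))) = h s + g s) \<and>
     (\<exists>\<pi>::'s \<Rightarrow> 'a. \<forall>s. (\<Sum>s'\<in>UNIV. P s (\<pi> s) s' * g s') = g s \<and>
                        r s (\<pi> s) + (\<Sum>s'\<in>UNIV. P s (\<pi> s) s' * h s') = h s + g s)"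

definition sup_norm :: "('s::finite \<Rightarrow> real) \<Rightarrow> real" where
  "sup_norm x = Max (range (\<lambda>s. \<bar>x s\<bar>))"

end

theory Submission
  imports Defs
begin

lemma sup_norm_ge: "\<bar>x s\<bar> \<le> sup_norm x"
  unfolding sup_norm_def by (rule Max_ge) auto

lemma sup_norm_le: "(\<And>s. \<bar>x s\<bar> \<le> c) \<Longrightarrow> sup_norm x \<le> c"
  unfolding sup_norm_def by (subst Max_le_iff) auto

lemma sum_P_le:
  assumes mdp: "is_mdp P" and le: "\<And>s. V s \<le> W s + d"
  shows "(\<Sum>s'\<in>UNIV. P s a s' * V s') \<le> (\<Sum>s'\<in>UNIV. P s a s' * W s') + d"
proof -
  have "(\<Sum>s'\<in>UNIV. P s a s' * V s') \<le> (\<Sum>s'\<in>UNIV. P s a s' * (W s' + d))"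
    using mdp le unfolding is_mdp_def by (intro sum_mono mult_left_mono) auto
  also have "\<dots> = (\<Sum>s'\<in>UNIV. P s a s' * W s') + d * (\<Sum>s'\<in>UNIV. P s a s')"
    by (simp add: algebra_simps sum.distrib sum_distrib_left)
  also have "\<dots> = (\<Sum>s'\<in>UNIV. P s a s' * W s') + d"
    using mdp unfolding is_mdp_def by simp
  finally show ?thesis .
qed

lemma T_le:
  assumes mdp: "is_mdp P" and le: "\<And>s. V s \<le> W s + d"
  shows "bellman_T P r V s \<le> bellman_T P r W s + d"
  unfolding bellman_T_def
proof (subst Max_le_iff, simp, simp, intro ballI)
  fix y assume "y \<in> range (\<lambda>a. r s a + (\<Sum>s'\<in>UNIV. P s a s' * V s'))"
  then obtain a where y: "y = r s a + (\<Sum>s'\<in>UNIV. P s a s' * V s')" by auto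
  have "y \<le> r s a + (\<Sum>s'\<in>UNIV. P s a s' * W s') + d"
    using sum_P_le[OF mdp le, of s a] y by simp
  also have "r s a + (\<Sum>s'\<in>UNIV. P s a s' * W s') \<le> Max (range (\<lambda>a. r s a + (\<Sum>s'\<in>UNIV. P s a s' * W s')))"
    by (rule Max_ge) auto
  finally show "y \<le> Max (range (\<lambda>a. r s a + (\<Sum>s'\<in>UNIV. P s a s' * W s'))) + d" by simp
qed

lemma T_shift:
  assumes mdp: "is_mdp P" and sol: "modified_bellman_solution P r g h" and c: "c \<ge> 0"
  shows "bellman_T P r (\<lambda>s. h s + c * g s) s = h s + (c + 1) * g s"
proof -
  have eq: "\<And>a. r s a + (\<Sum>s'\<in>UNIV. P s a s' * (h s' + c * g s'))
      = (r s a + (\<Sum>s'\<in>UNIV. P s a s' * h s')) + c * (\<Sum>s'\<in>UNIV. P s a s' * g s')"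
    by (simp add: algebra_simps sum.distrib sum_distrib_left)
  from sol have s1: "Max (range (\<lambda>a. \<Sum>s'\<in>UNIV. P s a s' * g s')) = g s"
    and s2: "Max (range (\<lambda>a. r s a + (\<Sum>s'\<in>UNIV. P s a s' * h s'))) = h s + g s"
    unfolding modified_bellman_solution_def by auto
  from sol obtain \<pi> where pi: "\<forall>s. (\<Sum>s'\<in>UNIV. P s (\<pi> s) s' * g s') = g s \<and>
                        r s (\<pi> s) + (\<Sum>s'\<in>UNIV. P s (\<pi> s) s' * h s') = h s + g s"
    unfolding modified_bellman_solution_def by blast
  have up: "\<And>a. r s a + (\<Sum>s'\<in>UNIV. P s a s' * (h s' + c * g s')) \<le> h s + (c + 1) * g s"
  proof -
    fix a
    have A: "r s a + (\<Sum>s'\<in>UNIV. P s a s' * h s') \<le> h s + g s"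
      unfolding s2[symmetric] by (rule Max_ge) auto
    have B: "(\<Sum>s'\<in>UNIV. P s a s' * g s') \<le> g s"
      unfolding s1[symmetric] by (rule Max_ge) auto
    have "c * (\<Sum>s'\<in>UNIV. P s a s' * g s') \<le> c * g s" using B c by (rule mult_left_mono)
    with A show "?thesis a" unfolding eq by (simp add: algebra_simps)
  qed
  have at: "r s (\<pi> s) + (\<Sum>s'\<in>UNIV. P s (\<pi> s) s' * (h s' + c * g s')) = h s + (c + 1) * g s"
    unfolding eq using pi by (simp add: algebra_simps)
  show ?thesis unfolding bellman_T_def
  proof (rule antisym)
    show "Max (range (\<lambda>a. r s a + (\<Sum>s'\<in>UNIV. P s a s' * (h s' + c * g s')))) \<le> h s + (c + 1) * g s"
      using up by (subst Max_le_iff) auto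
    show "h s + (c + 1) * g s \<le> Max (range (\<lambda>a. r s a + (\<Sum>s'\<in>UNIV. P s a s' * (h s' + c * g s'))))"
      unfolding at[symmetric] by (rule Max_ge) auto
  qed
qed

theorem theorem9:
  fixes P :: "'s::finite \<Rightarrow> 'a::finite \<Rightarrow> 's \<Rightarrow> real"
    and r :: "'s \<Rightarrow> 'a \<Rightarrow> real"
    and g h :: "'s \<Rightarrow> real"
    and V :: "nat \<Rightarrow> 's \<Rightarrow> real"
    and lam :: "nat \<Rightarrow> real"
    and k :: nat
  assumes mdp: "is_mdp P"
    and sol: "modified_bellman_solution P r g h"
    and lam_bounds: "\<And>j. j \<ge> 1 \<Longrightarrow> 0 \<le> lam j \<and> lam j < 1"
    and avi: "\<And>j. j \<ge> 1 \<Longrightarrow>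
               V j = (\<lambda>s. lam j * V 0 s + (1 - lam j) * bellman_T P r (V (j - 1)) s)"
    and k: "k \<ge> 1"
  shows "sup_norm (\<lambda>s. (V k s - V 0 s) / (\<Sum>i=1..k. \<Prod>j=i..k. (1 - lam j)) - g s)
         \<le> 2 * (1 - lam k) / (\<Sum>i=1..k. \<Prod>j=i..k. (1 - lam j)) * sup_norm (\<lambda>s. V 0 s - h s)"
proof -
  define S where "S k = (\<Sum>i=1..k. \<Prod>j=i..k. (1 - lam j))" for k
  define D where "D = sup_norm (\<lambda>s. V 0 s - h s)"
  define T where "T = bellman_T P r"
  have S0: "S 0 = 0" unfolding S_def by simp
  have Srec: "S (Suc m) = (1 - lam (Suc m)) * (1 + S m)" for m
  proof -
    have "S (Suc m) = (\<Sum>i=1..m. \<Prod>j=i..Suc m. (1 - lam j)) + (1 - lam (Suc m))"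
      unfolding S_def by (simp add: sum.cl_ivl_Suc)
    also have "(\<Sum>i=1..m. \<Prod>j=i..Suc m. (1 - lam j)) = (\<Sum>i=1..m. (1 - lam (Suc m)) * (\<Prod>j=i..m. (1 - lam j)))"
      by (rule sum.cong) (auto simp: prod.cl_ivl_Suc)
    finally show ?thesis unfolding S_def by (simp add: sum_distrib_left algebra_simps)
  qed
  have Snn: "S m \<ge> 0" for m
  proof (induction m)
    case (Suc m)
    have "0 \<le> 1 - lam (Suc m)" using lam_bounds[of "Suc m"] by simp
    then show ?case unfolding Srec using Suc.IH by simp
  qed (simp add: S0)
  have D0: "D \<ge> 0" unfolding D_def using sup_norm_ge[of "\<lambda>s. V 0 s - h s"] by (meson abs_ge_zero order_trans)
  have Vsuc: "V (Suc m) s = lam (Suc m) * V 0 s + (1 - lam (Suc m)) * T (V m) s" for m s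
    using avi[of "Suc m"] unfolding T_def by simp
  have TU: "T (\<lambda>s. h s + S m * g s) s = h s + (S m + 1) * g s" for m s
    unfolding T_def by (rule T_shift[OF mdp sol Snn])
  have Tdiff: "\<bar>T X s - T Y s\<bar> \<le> d" if "\<And>s. \<bar>X s - Y s\<bar> \<le> d" for X Y d s
  proof -
    have "T X s \<le> T Y s + d" unfolding T_def
      by (rule T_le[OF mdp]) (use that in \<open>smt (verit)\<close>)
    moreover have "T Y s \<le> T X s + d" unfolding T_def
      by (rule T_le[OF mdp]) (use that in \<open>smt (verit)\<close>)
    ultimately show ?thesis by linarith
  qed
  have E: "\<bar>V m s - (h s + S m * g s)\<bar> \<le> D" for m s
  proof (induction m arbitrary: s)
    case 0
    then show ?case using sup_norm_ge[of "\<lambda>s. V 0 s - h s" s] unfolding D_def S0 by simp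
  next
    case (Suc m)
    let ?l = "lam (Suc m)"
    have l: "0 \<le> ?l" "?l < 1" using lam_bounds[of "Suc m"] by auto
    have td: "\<bar>T (V m) s - T (\<lambda>s. h s + S m * g s) s\<bar> \<le> D"
      by (rule Tdiff) (use Suc.IH in auto)
    have eq: "V (Suc m) s - (h s + S (Suc m) * g s)
       = ?l * (V 0 s - h s) + (1 - ?l) * (T (V m) s - T (\<lambda>s. h s + S m * g s) s)"
      unfolding Vsuc Srec TU by (simp add: algebra_simps)
    have a: "\<bar>?l * (V 0 s - h s)\<bar> \<le> ?l * D"
      using l sup_norm_ge[of "\<lambda>s. V 0 s - h s" s] unfolding D_def
      by (simp add: abs_mult mult_left_mono)
    have b: "\<bar>(1 - ?l) * (T (V m) s - T (\<lambda>s. h s + S m * g s) s)\<bar> \<le> (1 - ?l) * D"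
      using l td by (simp add: abs_mult mult_left_mono)
    have "\<bar>V (Suc m) s - (h s + S (Suc m) * g s)\<bar> \<le> ?l * D + (1 - ?l) * D"
      unfolding eq using a b abs_triangle_ineq order_trans add_mono by fastforce
    then show ?case by (simp add: algebra_simps)
  qed
  obtain m where km: "k = Suc m" using k by (cases k) auto
  let ?l = "lam k"
  have l: "0 \<le> ?l" "?l < 1" using lam_bounds[of k] k by auto
  have Spos: "S k > 0" unfolding km Srec using l Snn[of m] km by simp
  have main: "\<bar>(V k s - V 0 s) / S k - g s\<bar> \<le> 2 * (1 - ?l) / S k * D" for s
  proof -
    have td: "\<bar>T (V m) s - T (\<lambda>s. h s + S m * g s) s\<bar> \<le> D"
      by (rule Tdiff) (use E in auto)
    have h0: "\<bar>h s - V 0 s\<bar> \<le> D"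
      using sup_norm_ge[of "\<lambda>s. V 0 s - h s" s] unfolding D_def by simp
    have eq: "V k s - V 0 s - S k * g s
       = (1 - ?l) * ((T (V m) s - T (\<lambda>s. h s + S m * g s) s) + (h s - V 0 s))"
      unfolding km Vsuc Srec TU by (simp add: algebra_simps)
    have "\<bar>V k s - V 0 s - S k * g s\<bar> \<le> (1 - ?l) * (D + D)"
      unfolding eq abs_mult using l td h0
      by (intro mult_mono) (auto intro: order_trans[OF abs_triangle_ineq])
    moreover have "(V k s - V 0 s) / S k - g s = (V k s - V 0 s - S k * g s) / S k"
      using Spos by (simp add: field_simps)
    ultimately show ?thesis using Spos
      by (simp add: divide_right_mono abs_divide algebra_simps)
  qed
  show ?thesis
    using sup_norm_le[of "\<lambda>s. (V k s - V 0 s) / S k - g s", OF main]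
    unfolding S_def D_def by simp
qed

end
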